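(* Let $p_0,p_1,p_2\in\mathbb{Z}^2$ be such that $P:=\operatorname{conv}\{p_0,p_1,p_2\}$ is a triangle whose only integer points are $p_0,p_1,p_2$. Let $Q:=\operatorname{conv}\{q_0,q_1,q_2\}$ be a triangle with $p_i=(1-x_i)q_{i+1}+x_iq_{i+2}$ for $i=0,1,2$ (indices modulo $3$), where $0<x_i<1$. Then: (I) $Q$ is a maximal lattice-free triangle of type 3 if and only if either (a) $x_i+x_j>1$ for all $0\le i<j\le2$, or (b) $x_i+x_j<1$ for all $0\le i<j\le 2$. (II) If (a) holds, then $w(Q)=\dfrac{\min\{x_0,x_1,x_2\}}{x_0x_1x_2+(1-x_0)(1-x_1)(1-x_2)}$. (III) If (a) holds, then $w(Q)\le1+\frac{2}{\sqrt3}$, with equality if and only if $x_0=x_1=x_2=\frac1{\sqrt3}$.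
   Context: A closed convex set in $\mathbb{R}^2$ with non-empty interior is lattice-free if its interior contains no point of $\mathbb{Z}^2$, and maximal lattice-free if it is lattice-free and not properly contained in another lattice-free closed convex set with non-empty interior. A maximal lattice-free triangle of type 3 is a maximal lattice-free triangle having exactly three integer points on its boundary, one in the relative interior of each edge. For $u\in\mathbb{R}^2$, $w(Q,u):=\max_{x\in Q}u^\top x-\min_{x\in Q}u^\top x$ and the lattice width is $w(Q):=\min\{w(Q,u):u\in\mathbb{Z}^2\setminus\{o\}\}$. *)

theory Defs
  imports "HOL-Analysis.Analysis"
begin

definition int_pt :: "real \<times> real \<Rightarrow> bool" where
  "int_pt z \<longleftrightarrow> fst z \<in> \<int> \<and> snd z \<in> \<int>"

definition lattice_free :: "(real \<times> real) set \<Rightarrow> bool" where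
  "lattice_free K \<longleftrightarrow> closed K \<and> convex K \<and> interior K \<noteq> {} \<and>
     (\<forall>z. int_pt z \<longrightarrow> z \<notin> interior K)"

definition max_lattice_free :: "(real \<times> real) set \<Rightarrow> bool" where
  "max_lattice_free K \<longleftrightarrow> lattice_free K \<and>
     (\<forall>K'. lattice_free K' \<and> K \<subseteq> K' \<longrightarrow> K' = K)"

definition max_lf_triangle_type3 :: "(real \<times> real) set \<Rightarrow> bool" where
  "max_lf_triangle_type3 Q \<longleftrightarrow> max_lattice_free Q \<and>
     (\<exists>a b c. \<not> collinear {a, b, c} \<and> Q = convex hull {a, b, c} \<and>
        card {z. int_pt z \<and> z \<in> frontier Q} = 3 \<and>
        (\<exists>z. int_pt z \<and> z \<in> open_segment a b) \<and>
        (\<exists>z. int_pt z \<and> z \<in> open_segment b c) \<and>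
        (\<exists>z. int_pt z \<and> z \<in> open_segment c a))"

definition width_dir :: "(real \<times> real) set \<Rightarrow> real \<times> real \<Rightarrow> real" where
  "width_dir Q u = (SUP x\<in>Q. u \<bullet> x) - (INF x\<in>Q. u \<bullet> x)"

definition lattice_width :: "(real \<times> real) set \<Rightarrow> real" where
  "lattice_width Q = (INF u\<in>{u. int_pt u \<and> u \<noteq> 0}. width_dir Q u)"

end

theory Submission
  imports Defs
begin


definition det2 :: "real \<times> real \<Rightarrow> real \<times> real \<Rightarrow> real" where
  "det2 a b = fst a * snd b - snd a * fst b"

lemma line_from_comp:
  fixes a b c :: "real \<times> real"
  assumes "fst b - fst a = s * (fst c - fst a)" "snd b - snd a = s * (snd c - snd a)"
  shows "collinear {a, b, c}"
proof -
  have "b = (1 - s) *\<^sub>R a + (1 - (1 - s)) *\<^sub>R c"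
    using assms by (simp add: prod_eq_iff algebra_simps)
  then show ?thesis unfolding collinear_3_expand by (intro disjI2 exI[of _ "1 - s"]) simp
qed

lemma det_nz:
  assumes "\<not> collinear {a, b, c :: real \<times> real}"
  shows "det2 (b - a) (c - a) \<noteq> 0"
proof
  assume d: "det2 (b - a) (c - a) = 0"
  then have d': "(fst b - fst a) * (snd c - snd a) = (snd b - snd a) * (fst c - fst a)"
    by (simp add: det2_def algebra_simps)
  have "collinear {a, b, c}"
  proof (cases "a = c")
    case True then show ?thesis by (simp add: collinear_3_expand)
  next
    case False
    show ?thesis
    proof (cases "fst c = fst a")
      case True
      with False have ne: "snd c - snd a \<noteq> 0" by (metis prod_eq_iff right_minus_eq)
      from d' True ne have fb: "fst b - fst a = 0" by simp
      define s where "s = (snd b - snd a) / (snd c - snd a)"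
      have "snd b - snd a = s * (snd c - snd a)" using ne by (simp add: s_def)
      moreover have "fst b - fst a = s * (fst c - fst a)" using fb True by simp
      ultimately show ?thesis by (intro line_from_comp)
    next
      case False
      then have ne: "fst c - fst a \<noteq> 0" by simp
      define s where "s = (fst b - fst a) / (fst c - fst a)"
      have 1: "fst b - fst a = s * (fst c - fst a)" using ne by (simp add: s_def)
      have "(snd b - snd a) * (fst c - fst a) = s * (snd c - snd a) * (fst c - fst a)"
        using d' 1 by (simp add: algebra_simps)
      then have "snd b - snd a = s * (snd c - snd a)" using ne by simp
      with 1 show ?thesis by (rule line_from_comp)
    qed
  qed
  with assms show False by simp
qed

lemma coords_unique:
  fixes a b c :: "real \<times> real"
  assumes "\<not> collinear {a, b, c}" "u + v + w = 1" "u' + v' + w' = 1"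
    "u *\<^sub>R a + v *\<^sub>R b + w *\<^sub>R c = u' *\<^sub>R a + v' *\<^sub>R b + w' *\<^sub>R c"
  shows "u = u' \<and> v = v' \<and> w = w'"
proof -
  have dn: "det2 (b - a) (c - a) \<noteq> 0" using det_nz[OF assms(1)] .
  have u: "u = 1 - v - w" "u' = 1 - v' - w'" using assms by auto
  have e: "(v - v') *\<^sub>R (b - a) + (w - w') *\<^sub>R (c - a) = 0"
    using assms(4) unfolding u by (simp add: algebra_simps)
  then have e1: "(v - v') * (fst b - fst a) + (w - w') * (fst c - fst a) = 0"
    and e2: "(v - v') * (snd b - snd a) + (w - w') * (snd c - snd a) = 0"
    by (simp_all add: prod_eq_iff)
  define B1 where "B1 = fst b - fst a"
  define B2 where "B2 = snd b - snd a"
  define C1 where "C1 = fst c - fst a"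
  define C2 where "C2 = snd c - snd a"
  have dd: "det2 (b - a) (c - a) = B1 * C2 - B2 * C1" by (simp add: det2_def B1_def B2_def C1_def C2_def)
  have e1': "(v - v') * B1 = - ((w - w') * C1)" using e1 by (simp add: B1_def C1_def)
  have e2': "(v - v') * B2 = - ((w - w') * C2)" using e2 by (simp add: B2_def C2_def)
  have "(v - v') * det2 (b - a) (c - a) = ((v - v') * B1) * C2 - ((v - v') * B2) * C1"
    by (simp add: dd algebra_simps)
  also have "\<dots> = 0" unfolding e1' e2' by (simp add: algebra_simps)
  finally have "v = v'" using dn by simp
  moreover have "(w - w') * det2 (b - a) (c - a) = ((w - w') * C2) * B1 - ((w - w') * C1) * B2"
    by (simp add: dd algebra_simps)
  moreover have "((w - w') * C2) * B1 - ((w - w') * C1) * B2 = 0"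
    proof -
    have "((w - w') * C2) * B1 - ((w - w') * C1) * B2 = (-((v - v') * B2)) * B1 - (-((v - v') * B1)) * B2"
      by (simp add: e1' e2')
    also have "\<dots> = 0" by (simp add: algebra_simps)
    finally show ?thesis .
  qed
  ultimately have "w = w'" using dn by simp
  moreover note \<open>v = v'\<close>
  ultimately show ?thesis using u by simp
qed

lemma int_pt_add: "int_pt a \<Longrightarrow> int_pt b \<Longrightarrow> int_pt (a + b)"
  by (simp add: int_pt_def)
lemma int_pt_diff: "int_pt a \<Longrightarrow> int_pt b \<Longrightarrow> int_pt (a - b)"
  by (simp add: int_pt_def)
lemma int_pt_scale: "int_pt a \<Longrightarrow> k \<in> \<int> \<Longrightarrow> int_pt (k *\<^sub>R a)"
  by (simp add: int_pt_def)

lemma int_unit: "(d::real) \<in> \<int> \<Longrightarrow> 1 / d \<in> \<int> \<Longrightarrow> d \<noteq> 0 \<Longrightarrow> d = 1 \<or> d = -1"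
proof -
  assume "d \<in> \<int>" "1 / d \<in> \<int>" "d \<noteq> 0"
  then obtain k m where k: "d = of_int k" and m: "1 / d = of_int m" by (auto elim!: Ints_cases)
  with \<open>d \<noteq> 0\<close> have "of_int k * of_int m = (1::real)" using k m by (metis nonzero_mult_div_cancel_left mult.right_neutral times_divide_eq_right)
  then have "k * m = 1" by (metis of_int_1 of_int_eq_iff of_int_mult)
  then have "k = 1 \<or> k = -1" by (auto simp: zmult_eq_1_iff)
  then show ?thesis using k by auto
qed


lemma neg_case:
  fixes l0 l1 l2 :: int and x0 x1 x2 :: real
  assumes "l0 < 0" "l0 + l1 + l2 = 1" "0 < x0" "x0 < 1" "0 < x1" "x1 < 1" "0 < x2" "x2 < 1"
    and e1: "0 \<le> x2 * l2 + (1 - x0) * l0" and e2: "0 \<le> x0 * l0 + (1 - x1) * l1"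
    and c: "(x0 + x1 > 1 \<and> x0 + x2 > 1) \<or> (x0 + x1 < 1 \<and> x0 + x2 < 1)"
  shows False
proof -
  define k where "k = - l0"
  have k1: "(1::real) \<le> of_int k" using assms(1) unfolding k_def by simp
  have e1': "(1 - x0) * of_int k \<le> x2 * of_int l2" using e1 unfolding k_def by simp
  have e2': "x0 * of_int k \<le> (1 - x1) * of_int l1" using e2 unfolding k_def by simp
  have sum: "l1 + l2 = 1 + k" using assms(2) unfolding k_def by simp
  from c show False
  proof
    assume a: "x0 + x1 > 1 \<and> x0 + x2 > 1"
    have "(1 - x1) * of_int k < x0 * of_int k"
      using a k1 by (intro mult_strict_right_mono) auto
    with e2' have "(1 - x1) * of_int k < (1 - x1) * of_int l1" by linarith
    then have "of_int k < (of_int l1 :: real)" using assms(6) by (simp add: mult_less_cancel_left_pos)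
    then have "k + 1 \<le> l1" by simp
    moreover have "0 < (1 - x0) * of_int k" using k1 assms(4) by simp
    then have "0 < x2 * of_int l2" using e1' by linarith
    then have "(0::real) < of_int l2" using assms(7) by (simp add: zero_less_mult_iff)
    then have "1 \<le> l2" by simp
    ultimately show False using sum by simp
  next
    assume b: "x0 + x1 < 1 \<and> x0 + x2 < 1"
    have "x2 * of_int k < (1 - x0) * of_int k"
      using b k1 by (intro mult_strict_right_mono) auto
    with e1' have "x2 * of_int k < x2 * of_int l2" by linarith
    then have "of_int k < (of_int l2 :: real)" using assms(7) by (simp add: mult_less_cancel_left_pos)
    then have "k + 1 \<le> l2" by simp
    moreover have "0 < x0 * of_int k" using k1 assms(3) by simp
    then have "0 < (1 - x1) * of_int l1" using e2' by linarith
    then have "(0::real) < of_int l1" using assms(6) by (simp add: zero_less_mult_iff)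
    then have "1 \<le> l1" by simp
    ultimately show False using sum by simp
  qed
qed

lemma ex_t:
  fixes a' b b' c c' :: real
  assumes "a' < 0" "0 < b" "0 < c"
  shows "\<exists>t>0. 0 < (1 + t) * 0 - t * a' \<and> 0 < (1 + t) * b - t * b' \<and> 0 < (1 + t) * c - t * c'"
proof -
  define t where "t = min (b / (1 + \<bar>b'\<bar>)) (c / (1 + \<bar>c'\<bar>))"
  have tp: "t > 0" unfolding t_def using assms by simp
  have "t \<le> b / (1 + \<bar>b'\<bar>)" unfolding t_def by simp
  then have tb: "t * (1 + \<bar>b'\<bar>) \<le> b" by (subst (asm) pos_le_divide_eq) auto
  have "t \<le> c / (1 + \<bar>c'\<bar>)" unfolding t_def by simp
  then have tc: "t * (1 + \<bar>c'\<bar>) \<le> c" by (subst (asm) pos_le_divide_eq) auto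
  have m1: "t * b' \<le> t * \<bar>b'\<bar>" using tp by (intro mult_left_mono) auto
  have m2: "t * c' \<le> t * \<bar>c'\<bar>" using tp by (intro mult_left_mono) auto
  have p1: "0 < t * b" "0 < t * c" using tp assms by auto
  have p2: "0 < - (t * a')" using mult_pos_neg[OF tp assms(1)] by simp
  have x1: "(1 + t) * b - t * b' = b + t * b - t * b'" "(1 + t) * c - t * c' = c + t * c - t * c'"
    "t * (1 + \<bar>b'\<bar>) = t + t * \<bar>b'\<bar>" "t * (1 + \<bar>c'\<bar>) = t + t * \<bar>c'\<bar>"
    by (simp_all add: algebra_simps)
  have "0 < (1 + t) * b - t * b'" using m1 p1 x1 tb tp by (smt (verit))
  moreover have "0 < (1 + t) * c - t * c'" using m2 p1 x1 tc tp by (smt (verit))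
  moreover have "0 < (1 + t) * 0 - t * a'" using p2 by simp
  ultimately show ?thesis using tp by blast
qed


lemma le_absI: "m \<le> X \<Longrightarrow> m \<le> \<bar>X\<bar>" "m \<le> - X \<Longrightarrow> (m::real) \<le> \<bar>X\<bar>"
  by auto

lemma lt_from_diff: "a - b = X \<Longrightarrow> 0 < X \<Longrightarrow> b < (a::real)"
  by simp

lemma ge_times: "1 \<le> (a::real) \<Longrightarrow> 0 \<le> k \<Longrightarrow> k \<le> k * a"
  using mult_left_mono[of 1 a k] by simp

lemma pair_bound:
  fixes A B :: int and x0 x1 x2 :: real
  assumes "0 < x0" "x0 < 1" "0 < x1" "x1 < 1" "0 < x2" "x2 < 1"
    and c: "x0 + x1 > 1" "x0 + x2 > 1" "x1 + x2 > 1" and nz: "\<not> (A = 0 \<and> B = 0)"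
  shows "min x0 (min x1 x2) \<le> \<bar>x0 * A + (1 - x0 - x1) * B\<bar> \<or>
         min x0 (min x1 x2) \<le> \<bar>(x0 + x2 - 1) * A + (1 - x0) * B\<bar> \<or>
         min x0 (min x1 x2) \<le> \<bar>x1 * B - (1 - x2) * A\<bar>"
proof -
  have m: "min x0 (min x1 x2) \<le> x0" "min x0 (min x1 x2) \<le> x1" "min x0 (min x1 x2) \<le> x2" by auto
  have "A \<ge> 1 \<or> A = 0 \<or> A \<le> -1" by linarith
  moreover have "B \<ge> 1 \<or> B = 0 \<or> B \<le> -1" by linarith
  ultimately show ?thesis
  proof (elim disjE)
    assume "A \<ge> 1" "B \<ge> 1"
    then have "1 \<le> real_of_int A" "1 \<le> real_of_int B" by simp_all
    then have "x0 + x2 - 1 \<le> (x0 + x2 - 1) * A" "1 - x0 \<le> (1 - x0) * B"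
      using assms by (auto intro!: ge_times)
    then have "x2 \<le> (x0 + x2 - 1) * A + (1 - x0) * B" by linarith
    then show ?thesis using m by (intro disjI2 disjI1 le_absI) linarith
  next
    assume "A \<ge> 1" "B = 0"
    then have "1 \<le> real_of_int A" by simp
    then have "x0 \<le> x0 * A" using assms by (auto intro!: ge_times)
    then have "x0 \<le> x0 * A + (1 - x0 - x1) * B" using \<open>B = 0\<close> by simp
    then show ?thesis using m by (intro disjI1 le_absI) linarith
  next
    assume "A \<ge> 1" "B \<le> -1"
    then have "1 \<le> real_of_int A" "1 \<le> - real_of_int B" by simp_all
    have h1: "0 \<le> x0 + x1 - 1" using assms by linarith
    have h2: "0 \<le> real_of_int (- B)" using \<open>B \<le> -1\<close> by simp
    have "x0 \<le> x0 * A" using assms \<open>1 \<le> real_of_int A\<close> by (intro ge_times) auto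
    moreover have "0 \<le> (x0 + x1 - 1) * (- B)" using mult_nonneg_nonneg[OF h1 h2] .
    moreover have "(1 - x0 - x1) * B = (x0 + x1 - 1) * (- B)" by (simp add: algebra_simps)
    ultimately have "x0 \<le> x0 * A + (1 - x0 - x1) * B" by linarith
    then show ?thesis using m by (intro disjI1 le_absI) linarith
  next
    assume "A = 0" "B \<ge> 1"
    then have "1 \<le> real_of_int B" by simp
    then have "x1 \<le> x1 * B" using assms by (auto intro!: ge_times)
    then have "x1 \<le> x1 * B - (1 - x2) * A" using \<open>A = 0\<close> by simp
    then show ?thesis using m by (intro disjI2 le_absI) linarith
  next
    assume "A = 0" "B = 0" then show ?thesis using nz by simp
  next
    assume "A = 0" "B \<le> -1"
    then have "1 \<le> real_of_int (- B)" by simp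
    then have "x1 \<le> x1 * real_of_int (- B)" by (rule ge_times) (use assms in linarith)
    then have "x1 \<le> - (x1 * B - (1 - x2) * A)" using \<open>A = 0\<close> by simp
    then show ?thesis using m by (intro disjI2 le_absI) linarith
  next
    assume "A \<le> -1" "B \<ge> 1"
    then have "1 \<le> - real_of_int A" "1 \<le> real_of_int B" by simp_all
    have h1: "0 \<le> x0 + x1 - 1" using assms by linarith
    have h2: "0 \<le> real_of_int B" using \<open>B \<ge> 1\<close> by simp
    have "x0 \<le> x0 * (- A)" using assms \<open>1 \<le> - real_of_int A\<close> by (intro ge_times) auto
    moreover have "0 \<le> (x0 + x1 - 1) * B" using mult_nonneg_nonneg[OF h1 h2] .
    moreover have "x0 * (- A) = - (x0 * A)" "(1 - x0 - x1) * B = - ((x0 + x1 - 1) * B)" by (simp_all add: algebra_simps)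
    ultimately have "x0 \<le> - (x0 * A + (1 - x0 - x1) * B)" by linarith
    then show ?thesis using m by (intro disjI1 le_absI) linarith
  next
    assume "A \<le> -1" "B = 0"
    then have "1 \<le> real_of_int (- A)" by simp
    then have "x0 \<le> x0 * real_of_int (- A)" by (rule ge_times) (use assms in linarith)
    then have "x0 \<le> - (x0 * A + (1 - x0 - x1) * B)" using \<open>B = 0\<close> by simp
    then show ?thesis using m by (intro disjI1 le_absI) linarith
  next
    assume "A \<le> -1" "B \<le> -1"
    then have a: "1 \<le> real_of_int (- A)" "1 \<le> real_of_int (- B)" by simp_all
    have "x0 + x2 - 1 \<le> (x0 + x2 - 1) * real_of_int (- A)" using assms by (intro ge_times a) auto
    moreover have "1 - x0 \<le> (1 - x0) * real_of_int (- B)" using assms by (intro ge_times a) auto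
    moreover have "(x0 + x2 - 1) * (- A) = - ((x0 + x2 - 1) * A)" "(1 - x0) * (- B) = - ((1 - x0) * B)"
      by (simp_all add: algebra_simps)
    ultimately have "x2 \<le> - ((x0 + x2 - 1) * A + (1 - x0) * B)" by linarith
    then show ?thesis using m by (intro disjI2 disjI1 le_absI) linarith
  qed
qed

lemma dd_lem: "X - Y = Z \<Longrightarrow> (c + X / (D::real)) - (c + Y / D) = Z / D"
  by (simp add: diff_divide_distrib[symmetric])

lemma bound_lem:
  fixes m X D a b W :: real
  assumes "m \<le> \<bar>X\<bar>" "0 < D" "a - b = X / D" "\<bar>a - b\<bar> \<le> W"
  shows "m / D \<le> W"
proof -
  have "m / D \<le> \<bar>X\<bar> / D" using assms by (simp add: divide_right_mono)
  also have "\<dots> = \<bar>a - b\<bar>" using assms by (simp add: abs_divide)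
  finally show ?thesis using assms by simp
qed

lemma conv_le:
  fixes e0 e1 e2 g0 g1 g2 M :: real
  assumes "0 \<le> e0" "0 \<le> e1" "0 \<le> e2" "e0 + e1 + e2 = 1" "g0 \<le> M" "g1 \<le> M" "g2 \<le> M"
  shows "e0 * g0 + e1 * g1 + e2 * g2 \<le> M"
proof -
  have "e0 * g0 \<le> e0 * M" "e1 * g1 \<le> e1 * M" "e2 * g2 \<le> e2 * M"
    using assms by (auto intro: mult_left_mono)
  then have "e0 * g0 + e1 * g1 + e2 * g2 \<le> (e0 + e1 + e2) * M" by (simp add: algebra_simps)
  then show ?thesis using assms by simp
qed

lemma conv_ge:
  fixes e0 e1 e2 g0 g1 g2 M :: real
  assumes "0 \<le> e0" "0 \<le> e1" "0 \<le> e2" "e0 + e1 + e2 = 1" "M \<le> g0" "M \<le> g1" "M \<le> g2"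
  shows "M \<le> e0 * g0 + e1 * g1 + e2 * g2"
proof -
  have "e0 * M \<le> e0 * g0" "e1 * M \<le> e1 * g1" "e2 * M \<le> e2 * g2"
    using assms by (auto intro: mult_left_mono)
  then have "(e0 + e1 + e2) * M \<le> e0 * g0 + e1 * g1 + e2 * g2" by (simp add: algebra_simps)
  then show ?thesis using assms by simp
qed

lemma max3_bounds:
  fixes a b c :: real
  shows "\<bar>a - b\<bar> \<le> max a (max b c) - min a (min b c)"
    "\<bar>a - c\<bar> \<le> max a (max b c) - min a (min b c)"
    "\<bar>b - c\<bar> \<le> max a (max b c) - min a (min b c)"
  by (auto simp: max_def min_def abs_if)

locale tri =
  fixes p0 p1 p2 q0 q1 q2 :: "real \<times> real" and x0 x1 x2 :: real
  assumes ip0: "int_pt p0" and ip1: "int_pt p1" and ip2: "int_pt p2"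
    and ncP: "\<not> collinear {p0, p1, p2}"
    and onlyP: "{z. int_pt z \<and> z \<in> convex hull {p0, p1, p2}} = {p0, p1, p2}"
    and ncQ: "\<not> collinear {q0, q1, q2}"
    and hp0: "p0 = (1 - x0) *\<^sub>R q1 + x0 *\<^sub>R q2"
    and hp1: "p1 = (1 - x1) *\<^sub>R q2 + x1 *\<^sub>R q0"
    and hp2: "p2 = (1 - x2) *\<^sub>R q0 + x2 *\<^sub>R q1"
    and x0g: "0 < x0" and x0l: "x0 < 1" and x1g: "0 < x1" and x1l: "x1 < 1"
    and x2g: "0 < x2" and x2l: "x2 < 1"
begin

definition "v = p1 - p0"
definition "w = p2 - p0"
definition "d = det2 v w"
definition "l1 z = det2 (z - p0) w / d"
definition "l2 z = det2 v (z - p0) / d"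
definition "l0 z = 1 - l1 z - l2 z"

lemma d_nz: "d \<noteq> 0"
  using det_nz[OF ncP] by (simp add: d_def v_def w_def)

lemma rep': "z = p0 + l1 z *\<^sub>R v + l2 z *\<^sub>R w"
proof -
  have n1: "det2 (z - p0) w * fst v + det2 v (z - p0) * fst w = (fst z - fst p0) * d"
    by (simp add: d_def det2_def algebra_simps)
  have n2: "det2 (z - p0) w * snd v + det2 v (z - p0) * snd w = (snd z - snd p0) * d"
    by (simp add: d_def det2_def algebra_simps)
  have "l1 z * fst v + l2 z * fst w = (det2 (z - p0) w * fst v + det2 v (z - p0) * fst w) / d"
    by (simp add: l1_def l2_def add_divide_distrib)
  also have "\<dots> = fst z - fst p0" using d_nz by (simp add: n1)
  finally have 1: "l1 z * fst v + l2 z * fst w = fst z - fst p0" .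
  have "l1 z * snd v + l2 z * snd w = (det2 (z - p0) w * snd v + det2 v (z - p0) * snd w) / d"
    by (simp add: l1_def l2_def add_divide_distrib)
  also have "\<dots> = snd z - snd p0" using d_nz by (simp add: n2)
  finally have 2: "l1 z * snd v + l2 z * snd w = snd z - snd p0" .
  from 1 2 show ?thesis by (simp add: prod_eq_iff algebra_simps)
qed

lemma coord1: "l1 (p0 + a *\<^sub>R v + b *\<^sub>R w) = a"
  using d_nz unfolding l1_def d_def det2_def by (simp add: field_simps)
lemma coord2: "l2 (p0 + a *\<^sub>R v + b *\<^sub>R w) = b"
  using d_nz unfolding l2_def d_def det2_def by (simp add: field_simps)

lemma rep: "z = l0 z *\<^sub>R p0 + l1 z *\<^sub>R p1 + l2 z *\<^sub>R p2"
proof -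
  have "z = p0 + l1 z *\<^sub>R v + l2 z *\<^sub>R w" by (rule rep')
  then show ?thesis unfolding l0_def v_def w_def by (simp add: prod_eq_iff algebra_simps)
qed

lemma lp0: "l0 p0 = 1" "l1 p0 = 0" "l2 p0 = 0"
  using coord1[of 0 0] coord2[of 0 0] by (simp_all add: l0_def)
lemma lp1: "l0 p1 = 0" "l1 p1 = 1" "l2 p1 = 0"
  using coord1[of 1 0] coord2[of 1 0] by (simp_all add: l0_def v_def)
lemma lp2: "l0 p2 = 0" "l1 p2 = 0" "l2 p2 = 1"
  using coord1[of 0 1] coord2[of 0 1] by (simp_all add: l0_def w_def)

lemma vw_int: "int_pt v" "int_pt w"
  using ip0 ip1 ip2 by (simp_all add: v_def w_def int_pt_diff)

lemma d_int: "d \<in> \<int>"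
  using vw_int by (simp add: d_def det2_def int_pt_def)

lemma not_int_coord:
  assumes "int_pt e" "l1 e \<notin> \<int> \<or> l2 e \<notin> \<int>"
  shows False
proof -
  define fa where "fa = l1 e - of_int \<lfloor>l1 e\<rfloor>"
  define fb where "fb = l2 e - of_int \<lfloor>l2 e\<rfloor>"
  have fa: "0 \<le> fa" "fa < 1" unfolding fa_def by linarith+
  have fb: "0 \<le> fb" "fb < 1" unfolding fb_def by linarith+
  have nz: "fa \<noteq> 0 \<or> fb \<noteq> 0"
    using assms(2) unfolding fa_def fb_def by (metis Ints_of_int eq_iff_diff_eq_0)
  define z where "z = p0 + fa *\<^sub>R v + fb *\<^sub>R w"
  have z_eq: "z = e - of_int \<lfloor>l1 e\<rfloor> *\<^sub>R v - of_int \<lfloor>l2 e\<rfloor> *\<^sub>R w"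
    using rep'[of e] unfolding z_def fa_def fb_def by (simp add: algebra_simps)
  have iz: "int_pt z" unfolding z_eq
    by (intro int_pt_diff int_pt_scale assms(1) vw_int) auto
  have lz: "l1 z = fa" "l2 z = fb" unfolding z_def by (simp_all add: coord1 coord2)
  show False
  proof (cases "fa + fb \<le> 1")
    case True
    have "z = (1 - fa - fb) *\<^sub>R p0 + fa *\<^sub>R p1 + fb *\<^sub>R p2"
      unfolding z_def v_def w_def by (simp add: algebra_simps)
    then have "z \<in> convex hull {p0, p1, p2}"
      unfolding convex_hull_3 using True fa fb by (intro CollectI exI[of _ "1 - fa - fb"] exI[of _ fa] exI[of _ fb]) auto
    then have "z \<in> {p0, p1, p2}" using onlyP iz by blast
    then show False using lz lp0 lp1 lp2 nz fa fb by auto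
  next
    case False
    define z' where "z' = p0 + (1 - fa) *\<^sub>R v + (1 - fb) *\<^sub>R w"
    have z'_eq: "z' = p1 + p2 - z" unfolding z'_def z_def v_def w_def by (simp add: algebra_simps)
    have iz': "int_pt z'" unfolding z'_eq by (intro int_pt_diff int_pt_add ip1 ip2 iz)
    have lz': "l1 z' = 1 - fa" "l2 z' = 1 - fb" unfolding z'_def by (simp_all add: coord1 coord2)
    have "z' = (fa + fb - 1) *\<^sub>R p0 + (1 - fa) *\<^sub>R p1 + (1 - fb) *\<^sub>R p2"
      unfolding z'_def v_def w_def by (simp add: algebra_simps)
    then have "z' \<in> convex hull {p0, p1, p2}"
      unfolding convex_hull_3 using False fa fb by (intro CollectI exI[of _ "fa + fb - 1"] exI[of _ "1 - fa"] exI[of _ "1 - fb"]) auto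
    then have "z' \<in> {p0, p1, p2}" using onlyP iz' by blast
    then show False using lz' lp0 lp1 lp2 False fa fb by auto
  qed
qed

lemma d_unit: "d = 1 \<or> d = -1"
proof -
  have e1: "int_pt (p0 + (1, 0))" "int_pt (p0 + (0, 1))"
    using ip0 by (auto simp: int_pt_def)
  have a: "l1 (p0 + (1, 0)) = snd w / d" "l2 (p0 + (1, 0)) = - snd v / d"
    "l1 (p0 + (0, 1)) = - fst w / d" "l2 (p0 + (0, 1)) = fst v / d"
    by (simp_all add: l1_def l2_def det2_def)
  have i: "snd w / d \<in> \<int>" "- snd v / d \<in> \<int>" "- fst w / d \<in> \<int>" "fst v / d \<in> \<int>"
    using not_int_coord[OF e1(1)] not_int_coord[OF e1(2)] a by auto
  have "(snd w / d) * (fst v / d) - (- snd v / d) * (- fst w / d) = (fst v * snd w - snd v * fst w) / (d * d)"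
    by (simp add: diff_divide_distrib mult.commute)
  also have "\<dots> = 1 / d" using d_nz by (simp add: d_def det2_def)
  finally have "(snd w / d) * (fst v / d) - (- snd v / d) * (- fst w / d) = 1 / d" .
  moreover have "(snd w / d) * (fst v / d) - (- snd v / d) * (- fst w / d) \<in> \<int>"
    using i by (intro Ints_diff Ints_mult) auto
  ultimately show ?thesis using int_unit[OF d_int] d_nz by simp
qed

lemma l_int: assumes "int_pt z" shows "l1 z \<in> \<int>" "l2 z \<in> \<int>" "l0 z \<in> \<int>"
proof -
  have a: "det2 (z - p0) w \<in> \<int>" "det2 v (z - p0) \<in> \<int>"
    using assms ip0 vw_int by (auto simp: det2_def int_pt_def)
  show 1: "l1 z \<in> \<int>" "l2 z \<in> \<int>" using d_unit a by (auto simp: l1_def l2_def)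
  show "l0 z \<in> \<int>" using 1 by (simp add: l0_def)
qed


definition "E0 z = x1 * l1 z + (1 - x2) * l2 z"
definition "E1 z = x2 * l2 z + (1 - x0) * l0 z"
definition "E2 z = x0 * l0 z + (1 - x1) * l1 z"

abbreviation "Q \<equiv> convex hull {q0, q1, q2}"

lemma Esum: "E0 z + E1 z + E2 z = 1"
  by (simp add: E0_def E1_def E2_def l0_def algebra_simps)

lemma pq_comb: "A *\<^sub>R p0 + B *\<^sub>R p1 + C *\<^sub>R p2 =
   (x1 * B + (1 - x2) * C) *\<^sub>R q0 + (x2 * C + (1 - x0) * A) *\<^sub>R q1 + (x0 * A + (1 - x1) * B) *\<^sub>R q2"
  unfolding hp0 hp1 hp2 by (simp add: prod_eq_iff algebra_simps)

lemma repQ: "z = E0 z *\<^sub>R q0 + E1 z *\<^sub>R q1 + E2 z *\<^sub>R q2"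
proof -
  have "z = l0 z *\<^sub>R p0 + l1 z *\<^sub>R p1 + l2 z *\<^sub>R p2" by (rule rep)
  also have "\<dots> = E0 z *\<^sub>R q0 + E1 z *\<^sub>R q1 + E2 z *\<^sub>R q2"
    unfolding pq_comb E0_def E1_def E2_def ..
  finally show ?thesis .
qed

lemma E_unique:
  assumes "a + b + c = 1" "z = a *\<^sub>R q0 + b *\<^sub>R q1 + c *\<^sub>R q2"
  shows "E0 z = a" "E1 z = b" "E2 z = c"
  using coords_unique[OF ncQ Esum[of z] assms(1)] repQ[of z] assms(2) by auto

lemma Q_eq: "Q = {z. 0 \<le> E0 z \<and> 0 \<le> E1 z \<and> 0 \<le> E2 z}"
proof (intro set_eqI iffI)
  fix z assume "z \<in> Q"
  then obtain a b c where "0 \<le> a" "0 \<le> b" "0 \<le> c" "a + b + c = 1" "z = a *\<^sub>R q0 + b *\<^sub>R q1 + c *\<^sub>R q2"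
    unfolding convex_hull_3 by blast
  then show "z \<in> {z. 0 \<le> E0 z \<and> 0 \<le> E1 z \<and> 0 \<le> E2 z}" using E_unique by auto
next
  fix z assume "z \<in> {z. 0 \<le> E0 z \<and> 0 \<le> E1 z \<and> 0 \<le> E2 z}"
  then show "z \<in> Q" unfolding convex_hull_3 using repQ[of z] Esum[of z] by blast
qed

lemma dim2: "DIM(real \<times> real) = 2" by simp

lemma intQ_eq: "interior Q = {z. 0 < E0 z \<and> 0 < E1 z \<and> 0 < E2 z}"
proof (intro set_eqI iffI)
  fix z assume "z \<in> interior Q"
  then obtain a b c where "0 < a" "0 < b" "0 < c" and s: "a + b + c = 1" and e: "a *\<^sub>R q0 + b *\<^sub>R q1 + c *\<^sub>R q2 = z"
    unfolding interior_convex_hull_3_minimal[OF ncQ dim2] by auto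
  then show "z \<in> {z. 0 < E0 z \<and> 0 < E1 z \<and> 0 < E2 z}" using E_unique[OF s e[symmetric]] by auto
next
  fix z assume "z \<in> {z. 0 < E0 z \<and> 0 < E1 z \<and> 0 < E2 z}"
  then show "z \<in> interior Q" unfolding interior_convex_hull_3_minimal[OF ncQ dim2]
    using repQ[of z] Esum[of z] by (intro CollectI exI[of _ "E0 z"] exI[of _ "E1 z"] exI[of _ "E2 z"]) auto
qed

lemma l_aff: assumes "a + b = 1"
  shows "l1 (a *\<^sub>R z + b *\<^sub>R y) = a * l1 z + b * l1 y" "l2 (a *\<^sub>R z + b *\<^sub>R y) = a * l2 z + b * l2 y"
proof -
  have "a *\<^sub>R z + b *\<^sub>R y = a *\<^sub>R (p0 + l1 z *\<^sub>R v + l2 z *\<^sub>R w) + b *\<^sub>R (p0 + l1 y *\<^sub>R v + l2 y *\<^sub>R w)"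
    using rep'[of z] rep'[of y] by simp
  also have "\<dots> = (a + b) *\<^sub>R p0 + (a * l1 z + b * l1 y) *\<^sub>R v + (a * l2 z + b * l2 y) *\<^sub>R w"
    by (simp add: algebra_simps)
  also have "\<dots> = p0 + (a * l1 z + b * l1 y) *\<^sub>R v + (a * l2 z + b * l2 y) *\<^sub>R w"
    using assms by simp
  finally have e: "a *\<^sub>R z + b *\<^sub>R y = p0 + (a * l1 z + b * l1 y) *\<^sub>R v + (a * l2 z + b * l2 y) *\<^sub>R w" .
  show "l1 (a *\<^sub>R z + b *\<^sub>R y) = a * l1 z + b * l1 y" unfolding e by (rule coord1)
  show "l2 (a *\<^sub>R z + b *\<^sub>R y) = a * l2 z + b * l2 y" unfolding e by (rule coord2)
qed

lemma E_aff: assumes "a + b = 1"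
  shows "E0 (a *\<^sub>R z + b *\<^sub>R y) = a * E0 z + b * E0 y"
    "E1 (a *\<^sub>R z + b *\<^sub>R y) = a * E1 z + b * E1 y"
    "E2 (a *\<^sub>R z + b *\<^sub>R y) = a * E2 z + b * E2 y"
proof -
  have b: "b = 1 - a" using assms by simp
  show "E0 (a *\<^sub>R z + b *\<^sub>R y) = a * E0 z + b * E0 y"
    using l_aff[OF assms] unfolding E0_def by (simp add: algebra_simps)
  show "E1 (a *\<^sub>R z + b *\<^sub>R y) = a * E1 z + b * E1 y"
    using l_aff[OF assms] unfolding E1_def l0_def by (simp only:) (simp add: b algebra_simps)
  show "E2 (a *\<^sub>R z + b *\<^sub>R y) = a * E2 z + b * E2 y"
    using l_aff[OF assms] unfolding E2_def l0_def by (simp only:) (simp add: b algebra_simps)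
qed

lemma Ep0: "E0 p0 = 0" "E1 p0 = 1 - x0" "E2 p0 = x0"
  by (simp_all add: E0_def E1_def E2_def lp0)
lemma Ep1: "E0 p1 = x1" "E1 p1 = 0" "E2 p1 = 1 - x1"
  by (simp_all add: E0_def E1_def E2_def lp1)
lemma Ep2: "E0 p2 = 1 - x2" "E1 p2 = x2" "E2 p2 = 0"
  by (simp_all add: E0_def E1_def E2_def lp2)

lemma closedQ: "closed Q" by (simp add: compact_imp_closed compact_convex_hull)

lemma p_in_Q: "p0 \<in> Q" "p1 \<in> Q" "p2 \<in> Q"
  unfolding Q_eq using Ep0 Ep1 Ep2 x0g x0l x1g x1l x2g x2l by auto

lemma p_not_int: "p0 \<notin> interior Q" "p1 \<notin> interior Q" "p2 \<notin> interior Q"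
  unfolding intQ_eq using Ep0 Ep1 Ep2 by auto

lemma frontierQ: "frontier Q = Q - interior Q"
  using closedQ by (simp add: frontier_def closure_closed)

lemma p_frontier: "p0 \<in> frontier Q" "p1 \<in> frontier Q" "p2 \<in> frontier Q"
  unfolding frontierQ using p_in_Q p_not_int by auto


lemma int_in_Q:
  assumes "int_pt z" "z \<in> Q"
    and c: "(x0 + x1 > 1 \<and> x0 + x2 > 1 \<and> x1 + x2 > 1) \<or> (x0 + x1 < 1 \<and> x0 + x2 < 1 \<and> x1 + x2 < 1)"
  shows "z \<in> {p0, p1, p2}"
proof -
  obtain L0 where L0: "l0 z = of_int L0" using l_int(3)[OF assms(1)] by (auto elim: Ints_cases)
  obtain L1 where L1: "l1 z = of_int L1" using l_int(1)[OF assms(1)] by (auto elim: Ints_cases)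
  obtain L2 where L2: "l2 z = of_int L2" using l_int(2)[OF assms(1)] by (auto elim: Ints_cases)
  have s: "L0 + L1 + L2 = 1"
  proof -
    have "of_int (L0 + L1 + L2) = (of_int 1 :: real)" using L0 L1 L2 by (simp add: l0_def)
    then show ?thesis by (simp only: of_int_eq_iff)
  qed
  have E: "0 \<le> x1 * L1 + (1 - x2) * L2" "0 \<le> x2 * L2 + (1 - x0) * L0" "0 \<le> x0 * L0 + (1 - x1) * L1"
    using assms(2) unfolding Q_eq E0_def E1_def E2_def by (auto simp: L0 L1 L2)
  have "\<not> L0 < 0"
    using neg_case[of L0 L1 L2 x0 x1 x2] s E c x0g x0l x1g x1l x2g x2l by auto
  moreover have "\<not> L1 < 0"
    using neg_case[of L1 L2 L0 x1 x2 x0] s E c x0g x0l x1g x1l x2g x2l by (auto simp: add_ac)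
  moreover have "\<not> L2 < 0"
    using neg_case[of L2 L0 L1 x2 x0 x1] s E c x0g x0l x1g x1l x2g x2l by (auto simp: add_ac)
  ultimately have "(L0 = 1 \<and> L1 = 0 \<and> L2 = 0) \<or> (L0 = 0 \<and> L1 = 1 \<and> L2 = 0) \<or> (L0 = 0 \<and> L1 = 0 \<and> L2 = 1)"
    using s by auto
  then show ?thesis using rep[of z] L0 L1 L2 by auto
qed

lemma E_q: "E0 q0 = 1" "E1 q0 = 0" "E2 q0 = 0" "E0 q1 = 0" "E1 q1 = 1" "E2 q1 = 0"
  "E0 q2 = 0" "E1 q2 = 0" "E2 q2 = 1"
  using E_unique[of 1 0 0 q0] E_unique[of 0 1 0 q1] E_unique[of 0 0 1 q2] by auto

lemma q_dist: "q0 \<noteq> q1" "q1 \<noteq> q2" "q2 \<noteq> q0"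
  using E_q by auto

lemma p_dist: "p0 \<noteq> p1" "p1 \<noteq> p2" "p0 \<noteq> p2"
  using lp0 lp1 lp2 by auto

lemma int_interior_nonempty: "interior Q \<noteq> {}"
proof -
  have "(1/3) *\<^sub>R q0 + (1/3) *\<^sub>R q1 + (1/3) *\<^sub>R q2 \<in> interior Q"
    unfolding intQ_eq using E_unique[of "1/3" "1/3" "1/3"] by auto
  then show ?thesis by blast
qed

lemma max_aux:
  assumes K: "lattice_free K" "Q \<subseteq> K" "y \<in> K" and ip: "int_pt p" and t: "t > 0"
    "0 < (1 + t) * E0 p - t * E0 y" "0 < (1 + t) * E1 p - t * E1 y" "0 < (1 + t) * E2 p - t * E2 y"
    and yp: "y \<noteq> p"
  shows False
proof -
  define wp where "wp = (1 + t) *\<^sub>R p + (- t) *\<^sub>R y"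
  have ab: "(1 + t) + (- t) = 1" by simp
  have "wp \<in> interior Q" unfolding intQ_eq wp_def using E_aff[OF ab] t by simp
  then have wK: "wp \<in> interior K" using interior_mono[OF K(2)] by blast
  have yK: "y \<in> closure K" using K(3) closure_subset by blast
  have cK: "convex K" using K(1) by (simp add: lattice_free_def)
  have "wp \<noteq> y"
  proof
    assume "wp = y"
    then have "(1 + t) *\<^sub>R p = (1 + t) *\<^sub>R y" unfolding wp_def by (simp add: algebra_simps)
    then show False using yp t by simp
  qed
  moreover have "p = (1 - t / (1 + t)) *\<^sub>R wp + (t / (1 + t)) *\<^sub>R y"
  proof -
    have e: "1 - t / (1 + t) = 1 / (1 + t)" using t by (simp add: field_simps)
    have nz: "1 + t \<noteq> 0" using t by simp
    define u where "u = t / (1 + t)"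
    have u1: "(1 + t) * (1 - u) = 1" "(1 + t) * u = t" unfolding u_def using nz by (simp_all add: field_simps)
    have "(1 + t) *\<^sub>R ((1 - u) *\<^sub>R wp + u *\<^sub>R y) = ((1 + t) * (1 - u)) *\<^sub>R wp + ((1 + t) * u) *\<^sub>R y"
      by (simp only: scaleR_add_right scaleR_scaleR)
    also have "\<dots> = (1 + t) *\<^sub>R p" unfolding u1 wp_def by simp
    finally have "(1 - u) *\<^sub>R wp + u *\<^sub>R y = p" using nz by simp
    then show ?thesis unfolding u_def by simp
  qed
  moreover have "0 < t / (1 + t)" "t / (1 + t) < 1" using t by auto
  ultimately have "p \<in> open_segment wp y" unfolding in_segment by blast
  then have "p \<in> interior K" using in_interior_closure_convex_segment[OF cK wK yK] by blast
  then show False using K(1) ip unfolding lattice_free_def by blast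
qed

lemma lf_Q:
  assumes c: "(x0 + x1 > 1 \<and> x0 + x2 > 1 \<and> x1 + x2 > 1) \<or> (x0 + x1 < 1 \<and> x0 + x2 < 1 \<and> x1 + x2 < 1)"
  shows "lattice_free Q"
  unfolding lattice_free_def
proof (intro conjI allI impI)
  show "closed Q" by (rule closedQ)
  show "convex Q" by (rule convex_convex_hull)
  show "interior Q \<noteq> {}" by (rule int_interior_nonempty)
  fix z assume "int_pt z"
  show "z \<notin> interior Q"
  proof
    assume zi: "z \<in> interior Q"
    then have "z \<in> {p0, p1, p2}" using int_in_Q[OF \<open>int_pt z\<close> _ c] interior_subset by blast
    then show False using zi p_not_int by auto
  qed
qed

lemma maxQ:
  assumes c: "(x0 + x1 > 1 \<and> x0 + x2 > 1 \<and> x1 + x2 > 1) \<or> (x0 + x1 < 1 \<and> x0 + x2 < 1 \<and> x1 + x2 < 1)"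
  shows "max_lattice_free Q"
  unfolding max_lattice_free_def
proof (intro conjI allI impI)
  show "lattice_free Q" by (rule lf_Q[OF c])
  fix K assume KK: "lattice_free K \<and> Q \<subseteq> K"
  have "K \<subseteq> Q"
  proof
    fix y assume yK: "y \<in> K"
    show "y \<in> Q"
    proof (rule ccontr)
      assume "y \<notin> Q"
      then have "E0 y < 0 \<or> E1 y < 0 \<or> E2 y < 0" unfolding Q_eq by auto
      then show False
      proof (elim disjE)
        assume n: "E0 y < 0"
        obtain t where "t > 0" "0 < (1 + t) * 0 - t * E0 y" "0 < (1 + t) * (1 - x0) - t * E1 y"
          "0 < (1 + t) * x0 - t * E2 y"
          using ex_t[OF n, of "1 - x0" x0 "E1 y" "E2 y"] x0g x0l by auto
        moreover have "y \<noteq> p0" using n Ep0 by auto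
        ultimately show False using max_aux[of K y p0 t] KK yK ip0 Ep0 n by (auto simp: algebra_simps)
      next
        assume n: "E1 y < 0"
        obtain t where "t > 0" "0 < (1 + t) * 0 - t * E1 y" "0 < (1 + t) * (1 - x1) - t * E2 y"
          "0 < (1 + t) * x1 - t * E0 y"
          using ex_t[OF n, of "1 - x1" x1 "E2 y" "E0 y"] x1g x1l by auto
        moreover have "y \<noteq> p1" using n Ep1 by auto
        ultimately show False using max_aux[of K y p1 t] KK yK ip1 Ep1 n by (auto simp: algebra_simps)
      next
        assume n: "E2 y < 0"
        obtain t where "t > 0" "0 < (1 + t) * 0 - t * E2 y" "0 < (1 + t) * (1 - x2) - t * E0 y"
          "0 < (1 + t) * x2 - t * E1 y"
          using ex_t[OF n, of "1 - x2" x2 "E0 y" "E1 y"] x2g x2l by auto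
        moreover have "y \<noteq> p2" using n Ep2 by auto
        ultimately show False using max_aux[of K y p2 t] KK yK ip2 Ep2 n by (auto simp: algebra_simps)
      qed
    qed
  qed
  then show "K = Q" using KK by blast
qed

lemma frontier_ints:
  assumes c: "(x0 + x1 > 1 \<and> x0 + x2 > 1 \<and> x1 + x2 > 1) \<or> (x0 + x1 < 1 \<and> x0 + x2 < 1 \<and> x1 + x2 < 1)"
  shows "{z. int_pt z \<and> z \<in> frontier Q} = {p0, p1, p2}"
  using int_in_Q[OF _ _ c] p_frontier ip0 ip1 ip2 frontierQ by auto

lemma type3_if:
  assumes c: "(x0 + x1 > 1 \<and> x0 + x2 > 1 \<and> x1 + x2 > 1) \<or> (x0 + x1 < 1 \<and> x0 + x2 < 1 \<and> x1 + x2 < 1)"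
  shows "max_lf_triangle_type3 Q"
proof -
  have "max_lattice_free Q" by (rule maxQ[OF c])
  moreover have "card {z. int_pt z \<and> z \<in> frontier Q} = 3" unfolding frontier_ints[OF c] using p_dist by simp
  moreover have "int_pt p2 \<and> p2 \<in> open_segment q0 q1" using ip2 q_dist x2g x2l hp2 unfolding in_segment by auto
  moreover have "int_pt p0 \<and> p0 \<in> open_segment q1 q2" using ip0 q_dist x0g x0l hp0 unfolding in_segment by auto
  moreover have "int_pt p1 \<and> p1 \<in> open_segment q2 q0" using ip1 q_dist x1g x1l hp1 unfolding in_segment by auto
  ultimately show ?thesis unfolding max_lf_triangle_type3_def using ncQ by blast
qed

lemma bad_point:
  assumes T: "max_lf_triangle_type3 Q" and ab: "a \<in> \<int>" "b \<in> \<int>"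
    and nv: "\<not> (a = 0 \<and> b = 0)" "\<not> (a = 1 \<and> b = 0)" "\<not> (a = 0 \<and> b = 1)"
    and rQ: "p0 + a *\<^sub>R v + b *\<^sub>R w \<in> Q"
  shows False
proof -
  define r where "r = p0 + a *\<^sub>R v + b *\<^sub>R w"
  have lf: "lattice_free Q" and cd: "card {z. int_pt z \<and> z \<in> frontier Q} = 3"
    using T by (auto simp: max_lf_triangle_type3_def max_lattice_free_def)
  have ir: "int_pt r" unfolding r_def by (intro int_pt_add int_pt_scale ip0 vw_int ab)
  then have "r \<notin> interior Q" using lf unfolding lattice_free_def by blast
  then have rf: "r \<in> frontier Q" using rQ unfolding frontierQ r_def by blast
  have lr: "l1 r = a" "l2 r = b" unfolding r_def by (simp_all add: coord1 coord2)
  have rd: "r \<noteq> p0" "r \<noteq> p1" "r \<noteq> p2" using lr lp0 lp1 lp2 nv by auto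
  let ?S = "{z. int_pt z \<and> z \<in> frontier Q}"
  have sub: "{p0, p1, p2, r} \<subseteq> ?S" using ir rf p_frontier ip0 ip1 ip2 by auto
  show False
  proof (cases "finite ?S")
    case True
    have "card {p0, p1, p2, r} = 4" using rd p_dist by auto
    then have "4 \<le> card ?S" using card_mono[OF True sub] by simp
    then show False using cd by simp
  next
    case False
    then show False using cd by simp
  qed
qed

lemma type3_only_if:
  assumes T: "max_lf_triangle_type3 Q"
  shows "(x0 + x1 > 1 \<and> x0 + x2 > 1 \<and> x1 + x2 > 1) \<or> (x0 + x1 < 1 \<and> x0 + x2 < 1 \<and> x1 + x2 < 1)"
proof (rule ccontr)
  assume nc: "\<not> ?thesis"
  have "(x0 + x2 \<ge> 1 \<and> x0 + x1 \<le> 1) \<or> (x0 + x1 \<ge> 1 \<and> x1 + x2 \<le> 1) \<or> (x1 + x2 \<ge> 1 \<and> x0 + x2 \<le> 1)"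
    using nc by linarith
  then show False
  proof (elim disjE conjE)
    assume h: "x0 + x2 \<ge> 1" "x0 + x1 \<le> 1"
    have "p0 + 1 *\<^sub>R v + 1 *\<^sub>R w \<in> Q" unfolding Q_eq E0_def E1_def E2_def l0_def mem_Collect_eq coord1 coord2
      using h x1g x2l by simp
    then show False using bad_point[OF T, of 1 1] by simp
  next
    assume h: "x0 + x1 \<ge> 1" "x1 + x2 \<le> 1"
    have "p0 + (-1) *\<^sub>R v + 1 *\<^sub>R w \<in> Q" unfolding Q_eq E0_def E1_def E2_def l0_def mem_Collect_eq coord1 coord2
      using h x2g x0l by simp
    then show False using bad_point[OF T, of "-1" 1] by simp
  next
    assume h: "x1 + x2 \<ge> 1" "x0 + x2 \<le> 1"
    have "p0 + 1 *\<^sub>R v + (-1) *\<^sub>R w \<in> Q" unfolding Q_eq E0_def E1_def E2_def l0_def mem_Collect_eq coord1 coord2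
      using h x0g x1l by simp
    then show False using bad_point[OF T, of 1 "-1"] by simp
  qed
qed


definition "DD = x0 * x1 * x2 + (1 - x0) * (1 - x1) * (1 - x2)"

lemma DD_pos: "0 < DD"
  unfolding DD_def using x0g x0l x1g x1l x2g x2l by (intro add_pos_pos mult_pos_pos) auto

lemma Dq: "DD *\<^sub>R q0 = ((1 - x0) * (1 - x1)) *\<^sub>R p2 + (x0 * x2) *\<^sub>R p1 - (x2 * (1 - x1)) *\<^sub>R p0"
  "DD *\<^sub>R q1 = ((1 - x1) * (1 - x2)) *\<^sub>R p0 + (x0 * x1) *\<^sub>R p2 - (x0 * (1 - x2)) *\<^sub>R p1"
  "DD *\<^sub>R q2 = ((1 - x2) * (1 - x0)) *\<^sub>R p1 + (x1 * x2) *\<^sub>R p0 - (x1 * (1 - x0)) *\<^sub>R p2"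
  unfolding DD_def hp0 hp1 hp2 by (simp_all add: prod_eq_iff algebra_simps)

lemma g_formula:
  fixes u :: "real \<times> real"
  defines "c \<equiv> inner u p0" and "A \<equiv> inner u v" and "B \<equiv> inner u w"
  shows "inner u q0 = c + (x0 * x2 * A + (1 - x0) * (1 - x1) * B) / DD"
    "inner u q1 = c + (- x0 * (1 - x2) * A + x0 * x1 * B) / DD"
    "inner u q2 = c + ((1 - x2) * (1 - x0) * A - x1 * (1 - x0) * B) / DD"
proof -
  have i1: "inner u p1 = c + A" "inner u p2 = c + B"
    unfolding c_def A_def B_def v_def w_def by (simp_all add: inner_diff_right)
  have "DD * inner u q0 = inner u (DD *\<^sub>R q0)" by simp
  also have "\<dots> = DD * c + (x0 * x2 * A + (1 - x0) * (1 - x1) * B)"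
    unfolding Dq inner_diff_right inner_add_right inner_scaleR_right i1 c_def[symmetric]
    by (simp add: DD_def algebra_simps)
  finally show "inner u q0 = c + (x0 * x2 * A + (1 - x0) * (1 - x1) * B) / DD"
    using DD_pos by (simp add: field_simps)
  have "DD * inner u q1 = inner u (DD *\<^sub>R q1)" by simp
  also have "\<dots> = DD * c + (- x0 * (1 - x2) * A + x0 * x1 * B)"
    unfolding Dq inner_diff_right inner_add_right inner_scaleR_right i1 c_def[symmetric]
    by (simp add: DD_def algebra_simps)
  finally show "inner u q1 = c + (- x0 * (1 - x2) * A + x0 * x1 * B) / DD"
    using DD_pos by (simp add: field_simps)
  have "DD * inner u q2 = inner u (DD *\<^sub>R q2)" by simp
  also have "\<dots> = DD * c + ((1 - x2) * (1 - x0) * A - x1 * (1 - x0) * B)"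
    unfolding Dq inner_diff_right inner_add_right inner_scaleR_right i1 c_def[symmetric]
    by (simp add: DD_def algebra_simps)
  finally show "inner u q2 = c + ((1 - x2) * (1 - x0) * A - x1 * (1 - x0) * B) / DD"
    using DD_pos by (simp add: field_simps)
qed

lemma width_eq:
  "width_dir Q u = max (inner u q0) (max (inner u q1) (inner u q2)) - min (inner u q0) (min (inner u q1) (inner u q2))"
proof -
  let ?M = "max (inner u q0) (max (inner u q1) (inner u q2))"
  let ?m = "min (inner u q0) (min (inner u q1) (inner u q2))"
  have qQ: "q0 \<in> Q" "q1 \<in> Q" "q2 \<in> Q" by (simp_all add: hull_inc)
  have ex: "inner u z = E0 z * inner u q0 + E1 z * inner u q1 + E2 z * inner u q2" for z
    by (subst repQ[of z]) (simp add: inner_add_right)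
  have "(SUP z\<in>Q. inner u z) = ?M"
  proof (rule cSup_eq_maximum)
    show "?M \<in> (\<lambda>z. inner u z) ` Q" using qQ by (auto simp: max_def)
    fix y assume "y \<in> (\<lambda>z. inner u z) ` Q"
    then obtain z where z: "z \<in> Q" "y = inner u z" by auto
    show "y \<le> ?M" unfolding z(2) ex[of z] using z(1) Esum[of z] unfolding Q_eq
      by (intro conv_le) auto
  qed
  moreover have "(INF z\<in>Q. inner u z) = ?m"
  proof (rule cInf_eq_minimum)
    show "?m \<in> (\<lambda>z. inner u z) ` Q" using qQ by (auto simp: min_def)
    fix y assume "y \<in> (\<lambda>z. inner u z) ` Q"
    then obtain z where z: "z \<in> Q" "y = inner u z" by auto
    show "?m \<le> y" unfolding z(2) ex[of z] using z(1) Esum[of z] unfolding Q_eq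
      by (intro conv_ge) auto
  qed
  ultimately show ?thesis by (simp add: width_dir_def)
qed

lemma inner_int: "int_pt u \<Longrightarrow> int_pt a \<Longrightarrow> inner u a \<in> \<int>"
  by (simp add: int_pt_def inner_prod_def)

lemma u_nz:
  assumes "u \<noteq> 0" shows "\<not> (inner u v = 0 \<and> inner u w = 0)"
proof
  assume h: "inner u v = 0 \<and> inner u w = 0"
  have "fst u * d = inner u v * snd w - inner u w * snd v"
    by (simp add: d_def det2_def inner_prod_def algebra_simps)
  moreover have "snd u * d = inner u w * fst v - inner u v * fst w"
    by (simp add: d_def det2_def inner_prod_def algebra_simps)
  ultimately have "fst u = 0" "snd u = 0" using h d_nz by auto
  then show False using assms by (simp add: prod_eq_iff)
qed

lemma u_exists:
  fixes A B :: int
  assumes "\<not> (A = 0 \<and> B = 0)"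
  shows "\<exists>u. int_pt u \<and> u \<noteq> 0 \<and> inner u v = A \<and> inner u w = B"
proof -
  define u where "u = ((A * snd w - B * snd v) / d, (B * fst v - A * fst w) / d)"
  have "inner u v = ((A * snd w - B * snd v) * fst v + (B * fst v - A * fst w) * snd v) / d"
    unfolding u_def by (simp add: inner_prod_def add_divide_distrib)
  also have "\<dots> = A * (fst v * snd w - snd v * fst w) / d" by (simp add: algebra_simps)
  finally have "inner u v = A * (fst v * snd w - snd v * fst w) / d" .
  then have 1: "inner u v = A" using d_nz by (simp add: d_def det2_def)
  have "inner u w = ((A * snd w - B * snd v) * fst w + (B * fst v - A * fst w) * snd w) / d"
    unfolding u_def by (simp add: inner_prod_def add_divide_distrib)
  also have "\<dots> = B * (fst v * snd w - snd v * fst w) / d" by (simp add: algebra_simps)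
  finally have "inner u w = B * (fst v * snd w - snd v * fst w) / d" .
  then have 2: "inner u w = B" using d_nz by (simp add: d_def det2_def)
  have "int_pt u" unfolding u_def int_pt_def using d_unit vw_int
    by (auto simp: int_pt_def)
  moreover have "u \<noteq> 0" using 1 2 assms by auto
  ultimately show ?thesis using 1 2 by blast
qed

lemma lattice_width_eq:
  assumes c: "x0 + x1 > 1" "x0 + x2 > 1" "x1 + x2 > 1"
  shows "lattice_width Q = min x0 (min x1 x2) / DD"
  unfolding lattice_width_def
proof (rule cInf_eq_minimum)
  let ?m = "min x0 (min x1 x2)"
  fix y assume "y \<in> width_dir Q ` {u. int_pt u \<and> u \<noteq> 0}"
  then obtain u where u: "int_pt u" "u \<noteq> 0" "y = width_dir Q u" by auto
  obtain A where A: "inner u v = of_int A" using inner_int[OF u(1) vw_int(1)] by (auto elim: Ints_cases)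
  obtain B where B: "inner u w = of_int B" using inner_int[OF u(1) vw_int(2)] by (auto elim: Ints_cases)
  have nz: "\<not> (A = 0 \<and> B = 0)" using u_nz[OF u(2)] A B by auto
  note g = g_formula[of u, unfolded A B]
  have pb: "?m \<le> \<bar>x0 * A + (1 - x0 - x1) * B\<bar> \<or> ?m \<le> \<bar>(x0 + x2 - 1) * A + (1 - x0) * B\<bar> \<or>
         ?m \<le> \<bar>x1 * B - (1 - x2) * A\<bar>"
    by (rule pair_bound[OF x0g x0l x1g x1l x2g x2l c nz])
  have e1: "inner u q0 - inner u q1 = (x0 * A + (1 - x0 - x1) * B) / DD"
    unfolding g by (rule dd_lem) (simp add: algebra_simps)
  have e2: "inner u q0 - inner u q2 = ((x0 + x2 - 1) * A + (1 - x0) * B) / DD"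
    unfolding g by (rule dd_lem) (simp add: algebra_simps)
  have e3: "inner u q1 - inner u q2 = (x1 * B - (1 - x2) * A) / DD"
    unfolding g by (rule dd_lem) (simp add: algebra_simps)
  note mb = max3_bounds[where a="inner u q0" and b="inner u q1" and c="inner u q2"]
  from pb have "?m / DD \<le> max (inner u q0) (max (inner u q1) (inner u q2)) - min (inner u q0) (min (inner u q1) (inner u q2))"
  proof (elim disjE)
    assume h: "?m \<le> \<bar>x0 * A + (1 - x0 - x1) * B\<bar>"
    show ?thesis by (rule bound_lem[OF h DD_pos e1 mb(1)])
  next
    assume h: "?m \<le> \<bar>(x0 + x2 - 1) * A + (1 - x0) * B\<bar>"
    show ?thesis by (rule bound_lem[OF h DD_pos e2 mb(2)])
  next
    assume h: "?m \<le> \<bar>x1 * B - (1 - x2) * A\<bar>"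
    show ?thesis by (rule bound_lem[OF h DD_pos e3 mb(3)])
  qed
  then show "?m / DD \<le> y" unfolding u(3) width_eq .
next
  let ?m = "min x0 (min x1 x2)"
  have DDp: "0 < DD" by (rule DD_pos)
  have "\<exists>u. int_pt u \<and> u \<noteq> 0 \<and> width_dir Q u = ?m / DD"
  proof -
    have "?m = x0 \<or> ?m = x1 \<or> ?m = x2" by (auto simp: min_def)
    then show ?thesis
    proof (elim disjE)
      assume mm: "?m = x0"
      obtain u where u: "int_pt u" "u \<noteq> 0" "inner u v = 1" "inner u w = 0" using u_exists[of 1 0] by auto
      note g = g_formula[of u, unfolded u(3,4)]
      have "inner u q0 - inner u q1 = x0 / DD" "inner u q0 - inner u q2 = (x0 + x2 - 1) / DD"
        "inner u q2 - inner u q1 = (1 - x2) / DD"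
        unfolding g by (rule dd_lem, simp add: algebra_simps)+
      moreover have "0 < (x0 + x2 - 1) / DD" "0 < (1 - x2) / DD" using c x2l DDp by auto
      ultimately have o: "inner u q1 < inner u q2" "inner u q2 < inner u q0" "inner u q0 - inner u q1 = x0 / DD"
        by (blast intro: lt_from_diff)+
      then have "max (inner u q0) (max (inner u q1) (inner u q2)) = inner u q0"
        "min (inner u q0) (min (inner u q1) (inner u q2)) = inner u q1" by (simp_all add: max_def min_def)
      then have "width_dir Q u = x0 / DD" unfolding width_eq using o by simp
      then show ?thesis using u mm by (intro exI[of _ u]) simp
    next
      assume mm: "?m = x1"
      obtain u where u: "int_pt u" "u \<noteq> 0" "inner u v = 0" "inner u w = 1" using u_exists[of 0 1] by auto
      note g = g_formula[of u, unfolded u(3,4)]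
      have "inner u q1 - inner u q2 = x1 / DD" "inner u q1 - inner u q0 = (x0 + x1 - 1) / DD"
        "inner u q0 - inner u q2 = (1 - x0) / DD"
        unfolding g by (rule dd_lem, simp add: algebra_simps)+
      moreover have "0 < (x0 + x1 - 1) / DD" "0 < (1 - x0) / DD" using c x0l DDp by auto
      ultimately have o: "inner u q2 < inner u q0" "inner u q0 < inner u q1" "inner u q1 - inner u q2 = x1 / DD"
        by (blast intro: lt_from_diff)+
      then have "max (inner u q0) (max (inner u q1) (inner u q2)) = inner u q1"
        "min (inner u q0) (min (inner u q1) (inner u q2)) = inner u q2" by (simp_all add: max_def min_def)
      then have "width_dir Q u = x1 / DD" unfolding width_eq using o by simp
      then show ?thesis using u mm by (intro exI[of _ u]) simp
    next
      assume mm: "?m = x2"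
      obtain u where u: "int_pt u" "u \<noteq> 0" "inner u v = 1" "inner u w = 1" using u_exists[of 1 1] by auto
      note g = g_formula[of u, unfolded u(3,4)]
      have "inner u q0 - inner u q2 = x2 / DD" "inner u q0 - inner u q1 = (1 - x1) / DD"
        "inner u q1 - inner u q2 = (x1 + x2 - 1) / DD"
        unfolding g by (rule dd_lem, simp add: algebra_simps)+
      moreover have "0 < (1 - x1) / DD" "0 < (x1 + x2 - 1) / DD" using c x1l DDp by auto
      ultimately have o: "inner u q2 < inner u q1" "inner u q1 < inner u q0" "inner u q0 - inner u q2 = x2 / DD"
        by (blast intro: lt_from_diff)+
      then have "max (inner u q0) (max (inner u q1) (inner u q2)) = inner u q0"
        "min (inner u q0) (min (inner u q1) (inner u q2)) = inner u q2" by (simp_all add: max_def min_def)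
      then have "width_dir Q u = x2 / DD" unfolding width_eq using o by simp
      then show ?thesis using u mm by (intro exI[of _ u]) simp
    qed
  qed
  then obtain u where uu: "int_pt u" "u \<noteq> 0" "width_dir Q u = ?m / DD" by blast
  show "?m / DD \<in> width_dir Q ` {u. int_pt u \<and> u \<noteq> 0}"
    by (rule image_eqI[where x=u]) (simp_all add: uu)
qed

end


lemma ineq3:
  fixes m y1 y2 D :: real
  assumes "0 < m" "m < 1" "y1 < 1" "y2 < 1" "m \<le> y1" "m \<le> y2" "1 < m + y1" "1 < m + y2"
    and D: "D = m * y1 * y2 + (1 - m) * (1 - y1) * (1 - y2)"
  shows "m / D \<le> 1 + 2 / sqrt 3"
    "m / D = 1 + 2 / sqrt 3 \<longleftrightarrow> m = 1 / sqrt 3 \<and> y1 = 1 / sqrt 3 \<and> y2 = 1 / sqrt 3"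
proof -
  define r where "r = 1 / sqrt 3"
  have rp: "0 < r" unfolding r_def by simp
  have r2: "3 * r^2 = 1" unfolding r_def by (simp add: power_divide)
  have "sqrt 3 < 2"
    using real_sqrt_less_mono[of 3 4] by simp
  then have rh: "1 / 2 < r" unfolding r_def by (simp add: field_simps)
  have c: "1 + 2 / sqrt 3 = 1 + 2 * r" unfolding r_def by simp
  define c where "c = 1 + 2 * r"
  have cp: "2 < c" using rh unfolding c_def by simp
  have Dpos: "0 < D"
    unfolding D using assms by (intro add_pos_pos mult_pos_pos) auto
  have ident: "c * (m * m * m + (1 - m) * (1 - m) * (1 - m)) - m = 3 * c * (m - r)^2"
  proof -
    have "c * (m * m * m + (1 - m) * (1 - m) * (1 - m)) - m - 3 * c * (m - r)^2 = (1 - 3 * r^2) * (1 + 2 * r - 4 * m)"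
      unfolding c_def by (simp add: algebra_simps power2_eq_square)
    then show ?thesis using r2 by simp
  qed
  have main: "m \<le> c * D \<and> (m = c * D \<longleftrightarrow> m = r \<and> y1 = r \<and> y2 = r)"
  proof (cases "1 / 2 \<le> m")
    case True
    define D0 where "D0 = m * m * m + (1 - m) * (1 - m) * (1 - m)"
    have dd: "D - D0 = (y1 - m) * (y2 - 1 + m) + (y2 - m) * (2 * m - 1)"
      unfolding D D0_def by (simp add: algebra_simps)
    have t1: "0 \<le> (y1 - m) * (y2 - 1 + m)" "0 \<le> (y2 - m) * (2 * m - 1)"
      using assms True by (auto intro!: mult_nonneg_nonneg)
    have idt: "c * D0 - m = 3 * c * (m - r)^2" using ident unfolding D0_def .
    have sq: "0 \<le> 3 * c * (m - r)^2" using cp by simp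
    have "c * D - m = c * (D - D0) + (c * D0 - m)" by (simp add: algebra_simps)
    moreover have "0 \<le> c * (D - D0)" using dd t1 cp by simp
    ultimately have le: "m \<le> c * D" using idt sq by linarith
    have "m = c * D \<longleftrightarrow> m = r \<and> y1 = r \<and> y2 = r"
    proof
      assume e: "m = c * D"
      have "c * (D - D0) = 0" and "3 * c * (m - r)^2 = 0"
        using \<open>c * D - m = c * (D - D0) + (c * D0 - m)\<close> \<open>0 \<le> c * (D - D0)\<close> idt sq e by linarith+
      then have "D - D0 = 0" "m = r" using cp by auto
      then have "(y1 - m) * (y2 - 1 + m) = 0" "(y2 - m) * (2 * m - 1) = 0" using dd t1 by linarith+
      moreover have "y2 - 1 + m \<noteq> 0" "2 * m - 1 \<noteq> 0" using assms \<open>m = r\<close> rh by auto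
      ultimately show "m = r \<and> y1 = r \<and> y2 = r" using \<open>m = r\<close> by auto
    next
      assume e: "m = r \<and> y1 = r \<and> y2 = r"
      then have "D = D0" unfolding D D0_def by simp
      then show "m = c * D" using idt e by simp
    qed
    then show ?thesis using le by blast
  next
    case False
    have dd: "D = m * (1 - m) + (y1 - (1 - m)) * (y2 - (1 - m))"
      unfolding D by (simp add: algebra_simps)
    have "0 < (y1 - (1 - m)) * (y2 - (1 - m))" using assms by (intro mult_pos_pos) auto
    then have Dg: "m * (1 - m) < D" using dd by linarith
    have "2 * (m * (1 - m)) < c * (m * (1 - m))" using cp assms by (intro mult_strict_right_mono) auto
    moreover have "c * (m * (1 - m)) \<le> c * D" using Dg cp by (intro mult_left_mono) auto
    moreover have "m \<le> 2 * (m * (1 - m))" using False assms by (simp add: algebra_simps)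
    ultimately have "m < c * D" by linarith
    then show ?thesis using False rh by auto
  qed
  show "m / D \<le> 1 + 2 / sqrt 3" unfolding c c_def[symmetric] using main Dpos by (simp add: divide_le_eq)
  show "m / D = 1 + 2 / sqrt 3 \<longleftrightarrow> m = 1 / sqrt 3 \<and> y1 = 1 / sqrt 3 \<and> y2 = 1 / sqrt 3"
    unfolding c c_def[symmetric] r_def[symmetric] using main Dpos by (auto simp: divide_eq_eq)
qed


theorem lemma13:
  fixes p0 p1 p2 q0 q1 q2 :: "real \<times> real" and x0 x1 x2 :: real
  assumes "int_pt p0" "int_pt p1" "int_pt p2"
    and "\<not> collinear {p0, p1, p2}"
    and "{z. int_pt z \<and> z \<in> convex hull {p0, p1, p2}} = {p0, p1, p2}"
    and "\<not> collinear {q0, q1, q2}"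
    and "p0 = (1 - x0) *\<^sub>R q1 + x0 *\<^sub>R q2"
    and "p1 = (1 - x1) *\<^sub>R q2 + x1 *\<^sub>R q0"
    and "p2 = (1 - x2) *\<^sub>R q0 + x2 *\<^sub>R q1"
    and "0 < x0" "x0 < 1" "0 < x1" "x1 < 1" "0 < x2" "x2 < 1"
  shows "(max_lf_triangle_type3 (convex hull {q0, q1, q2}) \<longleftrightarrow>
            ((x0 + x1 > 1 \<and> x0 + x2 > 1 \<and> x1 + x2 > 1) \<or>
             (x0 + x1 < 1 \<and> x0 + x2 < 1 \<and> x1 + x2 < 1)))
       \<and> ((x0 + x1 > 1 \<and> x0 + x2 > 1 \<and> x1 + x2 > 1) \<longrightarrow>
            lattice_width (convex hull {q0, q1, q2}) =
              Min {x0, x1, x2} / (x0 * x1 * x2 + (1 - x0) * (1 - x1) * (1 - x2)))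
       \<and> ((x0 + x1 > 1 \<and> x0 + x2 > 1 \<and> x1 + x2 > 1) \<longrightarrow>
            lattice_width (convex hull {q0, q1, q2}) \<le> 1 + 2 / sqrt 3 \<and>
            (lattice_width (convex hull {q0, q1, q2}) = 1 + 2 / sqrt 3 \<longleftrightarrow>
               x0 = 1 / sqrt 3 \<and> x1 = 1 / sqrt 3 \<and> x2 = 1 / sqrt 3))"
  proof -
  interpret tri p0 p1 p2 q0 q1 q2 x0 x1 x2
    using assms by unfold_locales auto
  have Min3: "Min {x0, x1, x2} = min x0 (min x1 x2)" by (simp add: min.assoc)
  have DDe: "DD = x0 * x1 * x2 + (1 - x0) * (1 - x1) * (1 - x2)" by (simp add: DD_def)
  have I: "max_lf_triangle_type3 (convex hull {q0, q1, q2}) \<longleftrightarrow>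
            ((x0 + x1 > 1 \<and> x0 + x2 > 1 \<and> x1 + x2 > 1) \<or>
             (x0 + x1 < 1 \<and> x0 + x2 < 1 \<and> x1 + x2 < 1))"
    using type3_if type3_only_if by blast
  have II: "(x0 + x1 > 1 \<and> x0 + x2 > 1 \<and> x1 + x2 > 1) \<longrightarrow>
            lattice_width (convex hull {q0, q1, q2}) =
              Min {x0, x1, x2} / (x0 * x1 * x2 + (1 - x0) * (1 - x1) * (1 - x2))"
    using lattice_width_eq unfolding Min3 DDe by blast
  have III: "lattice_width (convex hull {q0, q1, q2}) \<le> 1 + 2 / sqrt 3 \<and>
            (lattice_width (convex hull {q0, q1, q2}) = 1 + 2 / sqrt 3 \<longleftrightarrow>
               x0 = 1 / sqrt 3 \<and> x1 = 1 / sqrt 3 \<and> x2 = 1 / sqrt 3)"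
    if c: "x0 + x1 > 1" "x0 + x2 > 1" "x1 + x2 > 1"
  proof -
    have lw: "lattice_width (convex hull {q0, q1, q2}) = min x0 (min x1 x2) / DD"
      using lattice_width_eq[OF c] .
    have "min x0 (min x1 x2) = x0 \<or> min x0 (min x1 x2) = x1 \<or> min x0 (min x1 x2) = x2"
      by (auto simp: min_def)
    then show ?thesis
    proof (elim disjE)
      assume mm: "min x0 (min x1 x2) = x0"
      then have "x0 \<le> x1" "x0 \<le> x2" by (auto simp: min_def split: if_splits)
      then show ?thesis using ineq3[of x0 x1 x2 DD] c x0g x0l x1l x2l unfolding lw mm DD_def by auto
    next
      assume mm: "min x0 (min x1 x2) = x1"
      then have "x1 \<le> x0" "x1 \<le> x2" by (auto simp: min_def split: if_splits)
      moreover have "DD = x1 * x2 * x0 + (1 - x1) * (1 - x2) * (1 - x0)" by (simp add: DD_def mult_ac)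
      ultimately show ?thesis using ineq3[of x1 x2 x0 DD] c x1g x1l x0l x2l unfolding lw mm by auto
    next
      assume mm: "min x0 (min x1 x2) = x2"
      then have "x2 \<le> x0" "x2 \<le> x1" by (auto simp: min_def split: if_splits)
      moreover have "DD = x2 * x0 * x1 + (1 - x2) * (1 - x0) * (1 - x1)" by (simp add: DD_def mult_ac)
      ultimately show ?thesis using ineq3[of x2 x0 x1 DD] c x2g x2l x0l x1l unfolding lw mm by auto
    qed
  qed
  show ?thesis using I II III by blast
qed

end
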